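(* Let $G$ be a simple graph with $m$ edges and $W$ wedges, and let $\mathcal{S}$ be a fixed nonempty subset of the wedges of $G$. Let $\mathcal{R}=(r_1,\dots,r_s)$ be $s\ge 2$ independent uniformly random edges of $G$, and let $X$ be the number of index pairs $i<j$ such that $\{r_i,r_j\}\in\mathcal{S}$. (1) $\mathbf{E}[X] = \binom{s}{2}\cdot \frac{2|\mathcal{S}|}{m^2}$. (2) There is an absolute constant $c'$ such that for every $\gamma\in(0,1)$: if $W\ge m$ and $s \ge c' m/(\gamma^3\sqrt{W})$, then with probability at least $1-\gamma$, $|X-\mathbf{E}[X]| \le (\gamma W/|\mathcal{S}|)\,\mathbf{E}[X]$.
   Context: A wedge is a path of length 2 in $G$, i.e. an unordered pair of distinct edges sharing exactly one vertex; $W$ denotes the total number of wedges of $G$. *)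

theory Defs
  imports "HOL-Probability.Probability"
begin

definition simple_graph :: "'a set set \<Rightarrow> bool" where
  "simple_graph E \<longleftrightarrow> finite E \<and> (\<forall>e\<in>E. card e = 2)"

definition wedges :: "'a set set \<Rightarrow> 'a set set set" where
  "wedges E = {{e, f} | e f. e \<in> E \<and> f \<in> E \<and> e \<noteq> f \<and> card (e \<inter> f) = 1}"

definition random_edges :: "'a set set \<Rightarrow> nat \<Rightarrow> (nat \<Rightarrow> 'a set) pmf" where
  "random_edges E s = Pi_pmf {..<s} undefined (\<lambda>_. pmf_of_set E)"

definition pair_count :: "'a set set set \<Rightarrow> nat \<Rightarrow> (nat \<Rightarrow> 'a set) \<Rightarrow> nat" where
  "pair_count S s r = card {(i, j). i < j \<and> j < s \<and> {r i, r j} \<in> S}"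

end

theory Submission
  imports Defs
begin

lemma prob_coords:
  fixes G :: "'b set set"
  assumes "finite A" "K \<subseteq> A" "finite G" "G \<noteq> {}"
  shows "measure_pmf.prob (Pi_pmf A d (\<lambda>_. pmf_of_set G)) {r. \<forall>k\<in>K. r k = v k}
         = (\<Prod>k\<in>K. indicator G (v k) / real (card G))"
proof -
  have e: "{r. \<forall>k\<in>K. r k = v k} = Pi A (\<lambda>x. if x\<in>K then {v x} else UNIV)"
    using assms(2) by (auto simp: Pi_def)
  have "measure_pmf.prob (Pi_pmf A d (\<lambda>_. pmf_of_set G)) {r. \<forall>k\<in>K. r k = v k}
     = (\<Prod>x\<in>A. measure_pmf.prob (pmf_of_set G) (if x\<in>K then {v x} else UNIV))"
    unfolding e by (rule measure_Pi_pmf_Pi[OF assms(1)])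
  also have "\<dots> = (\<Prod>x\<in>A. if x\<in>K then indicator G (v x) / real (card G) else 1)"
    by (intro prod.cong refl) (auto simp: measure_pmf_single assms)
  also have "\<dots> = (\<Prod>k\<in>K. indicator G (v k) / real (card G))"
    using assms(1,2) by (subst prod.If_cases) (auto simp: Int_absorb1 intro!: prod.cong)
  finally show ?thesis .
qed

lemma marg2:
  fixes G :: "'b set set"
  assumes "finite G" "G \<noteq> {}" "i \<noteq> j" "i < t" "j < t"
  shows "map_pmf (\<lambda>r. (r i, r j)) (random_edges G t) = pmf_of_set (G \<times> G)"
proof (rule pmf_eqI)
  fix z :: "'b set \<times> 'b set"
  obtain a b where z: "z = (a, b)" by force
  have pre: "(\<lambda>r. (r i, r j)) -` {z} = {r. \<forall>k\<in>{i,j}. r k = (if k = i then a else b)}"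
    using assms(3) by (auto simp: z)
  show "pmf (map_pmf (\<lambda>r. (r i, r j)) (random_edges G t)) z = pmf (pmf_of_set (G \<times> G)) z"
    unfolding pmf_map pre random_edges_def
    using assms
    by (subst prob_coords) (auto simp: z card_cartesian_product indicator_def)
qed

lemma marg3:
  fixes G :: "'b set set"
  assumes "finite G" "G \<noteq> {}" "i \<noteq> j" "i \<noteq> k" "j \<noteq> k" "i < t" "j < t" "k < t"
  shows "map_pmf (\<lambda>r. (r i, r j, r k)) (random_edges G t) = pmf_of_set (G \<times> G \<times> G)"
proof (rule pmf_eqI)
  fix z :: "'b set \<times> 'b set \<times> 'b set"
  obtain a b c where z: "z = (a, b, c)" by (cases z) force
  have pre: "(\<lambda>r. (r i, r j, r k)) -` {z} = {r. \<forall>x\<in>{i,j,k}. r x = (if x = i then a else if x = j then b else c)}"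
    using assms(3-5) by (auto simp: z)
  show "pmf (map_pmf (\<lambda>r. (r i, r j, r k)) (random_edges G t)) z = pmf (pmf_of_set (G \<times> G \<times> G)) z"
    unfolding pmf_map pre random_edges_def
    using assms
    by (subst prob_coords) (auto simp: z card_cartesian_product indicator_def)
qed

lemma marg4:
  fixes G :: "'b set set"
  assumes "finite G" "G \<noteq> {}" "i \<noteq> j" "i \<noteq> k" "j \<noteq> k" "i \<noteq> l" "j \<noteq> l" "k \<noteq> l"
    "i < t" "j < t" "k < t" "l < t"
  shows "map_pmf (\<lambda>r. ((r i, r j), (r k, r l))) (random_edges G t) = pmf_of_set ((G \<times> G) \<times> (G \<times> G))"
proof (rule pmf_eqI)
  fix z :: "('b set \<times> 'b set) \<times> ('b set \<times> 'b set)"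
  obtain a b c d where z: "z = ((a, b), (c, d))" by (cases z) force
  have pre: "(\<lambda>r. ((r i, r j), (r k, r l))) -` {z} = {r. \<forall>x\<in>{i,j,k,l}. r x = (if x = i then a else if x = j then b else if x = k then c else d)}"
    using assms(3-8) by (auto simp: z)
  show "pmf (map_pmf (\<lambda>r. ((r i, r j), (r k, r l))) (random_edges G t)) z = pmf (pmf_of_set ((G \<times> G) \<times> (G \<times> G))) z"
    unfolding pmf_map pre random_edges_def
    using assms
    by (subst prob_coords) (auto simp: z card_cartesian_product indicator_def)
qed

lemma wedge_elem':
  assumes "w \<in> wedges G"
  obtains e f where "w = {e, f}" "e \<in> G" "f \<in> G" "e \<noteq> f" "card (e \<inter> f) = 1"
  using assms unfolding wedges_def by blast

lemma wedge_pair: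
  assumes "{x, y} \<in> wedges G"
  shows "x \<in> G \<and> y \<in> G \<and> x \<noteq> y \<and> card (x \<inter> y) = 1"
proof -
  obtain e f where h: "{x, y} = {e, f}" "e \<in> G" "f \<in> G" "e \<noteq> f" "card (e \<inter> f) = 1"
    using assms by (rule wedge_elem')
  from h(1) have "(x = e \<and> y = f) \<or> (x = f \<and> y = e)" by (simp add: doubleton_eq_iff)
  then show ?thesis
  proof
    assume "x = e \<and> y = f" then show ?thesis using h by simp
  next
    assume "x = f \<and> y = e" then show ?thesis using h by (simp add: Int_commute)
  qed
qed

lemma finite_wedges:
  assumes "finite G" shows "finite (wedges G)"
proof -
  have "wedges G \<subseteq> Pow G" unfolding wedges_def by auto
  then show ?thesis using assms finite_subset by blast
qed
lemma wedge_elem: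
  assumes "w \<in> wedges G"
  obtains e f where "w = {e, f}" "e \<in> G" "f \<in> G" "e \<noteq> f"
  using assms by (rule wedge_elem')

lemma card_ordered_pairs:
  assumes "finite T" "T \<subseteq> wedges G"
  shows "card {(a, b). {a, b} \<in> T} = 2 * card T"
proof -
  have eq: "{(a, b). {a, b} \<in> T} = (\<Union>w\<in>T. {(a, b). {a, b} = w})" by blast
  have c2: "card {(a, b). {a, b} = w} = 2" if "w \<in> T" for w
  proof -
    have "w \<in> wedges G" using that assms(2) by blast
    then obtain e f where w: "w = {e, f}" "e \<noteq> f"
      by (rule wedge_elem)
    have "{(a, b). {a, b} = w} = {(e, f), (f, e)}" unfolding w(1) using w(2) by (auto simp: doubleton_eq_iff)
    then show ?thesis using w by simp
  qed
  have fin: "finite {(a, b). {a, b} = w}" if "w \<in> T" for w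
    by (rule card_ge_0_finite) (simp add: c2[OF that])
  have "card (\<Union>w\<in>T. {(a, b). {a, b} = w}) = (\<Sum>w\<in>T. card {(a, b). {a, b} = w})"
    by (rule card_UN_disjoint) (use assms fin in auto)
  also have "\<dots> = (\<Sum>w\<in>T. 2)" using c2 by simp
  finally show ?thesis using eq by simp
qed
lemma real_choose_two: "real (n choose 2) = real n * (real n - 1) / 2"
proof (induction n)
  case (Suc n)
  have "Suc n choose 2 = n + (n choose 2)" by (simp add: numeral_2_eq_2)
  then show ?case using Suc by (simp add: field_simps)
qed simp

lemma star_bound:
  assumes "simple_graph G" "card (wedges G) \<ge> 1"
  shows "real (card {y\<in>G. u \<in> y}) \<le> 2 * sqrt (real (card (wedges G)))"
proof -
  define S where "S = {y\<in>G. u \<in> y}"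
  define k where "k = card S"
  have finG: "finite G" using assms(1) unfolding simple_graph_def by auto
  have finS: "finite S" unfolding S_def using finG by auto
  have sub: "{Z. Z \<subseteq> S \<and> card Z = 2} \<subseteq> wedges G"
  proof
    fix Z assume "Z \<in> {Z. Z \<subseteq> S \<and> card Z = 2}"
    then obtain y1 y2 where Z: "Z = {y1, y2}" "y1 \<noteq> y2" "y1 \<in> S" "y2 \<in> S"
      by (auto simp: card_2_iff)
    have c1: "card y1 = 2" "card y2 = 2" using Z assms(1) unfolding S_def simple_graph_def by auto
    have fin1: "finite y1" by (rule card_ge_0_finite) (simp add: c1)
    have uin: "u \<in> y1 \<inter> y2" using Z unfolding S_def by auto
    have "card (y1 \<inter> y2) \<le> 2" using c1 card_mono[OF fin1, of "y1 \<inter> y2"] by auto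
    moreover have "card (y1 \<inter> y2) \<noteq> 2"
    proof
      assume h: "card (y1 \<inter> y2) = 2"
      have "y1 \<inter> y2 = y1" using card_subset_eq[OF fin1, of "y1 \<inter> y2"] h c1 by auto
      moreover have fin2: "finite y2" by (rule card_ge_0_finite) (simp add: c1)
      have "y1 \<inter> y2 = y2" using card_subset_eq[OF fin2, of "y1 \<inter> y2"] h c1 by auto
      ultimately show False using Z by auto
    qed
    moreover have "card (y1 \<inter> y2) \<noteq> 0" using uin fin1 by auto
    ultimately have "card (y1 \<inter> y2) = 1" by linarith
    then show "Z \<in> wedges G" unfolding wedges_def using Z S_def by auto
  qed
  have "k choose 2 \<le> card (wedges G)"
    using card_mono[OF finite_wedges[OF finG] sub] n_subsets[OF finS, of 2] k_def by simp
  then have kw: "real k * (real k - 1) / 2 \<le> real (card (wedges G))"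
  proof -
    assume h: "k choose 2 \<le> card (wedges G)"
    have "real (k choose 2) = real k * (real k - 1) / 2"
      by (rule real_choose_two)
    moreover have "real (k choose 2) \<le> real (card (wedges G))" using h by (simp only: of_nat_le_iff)
    ultimately show ?thesis by linarith
  qed
  have W1: "1 \<le> sqrt (real (card (wedges G)))" using assms(2) by simp
  show ?thesis
  proof (cases "k \<le> 1")
    case True
    then have "real k \<le> 1" by simp
    then show ?thesis using W1 unfolding k_def S_def by linarith
  next
    case False
    then have "real k \<le> 2 * (real k - 1)" by simp
    then have "real k * real k \<le> real k * (2 * (real k - 1))"
      by (intro mult_left_mono) auto
    also have "\<dots> = 4 * (real k * (real k - 1) / 2)" by simp
    also have "\<dots> \<le> 4 * real (card (wedges G))" using kw by simp
    finally have "(real k)^2 \<le> 4 * real (card (wedges G))" by (simp add: power2_eq_square)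
    then have "real k \<le> sqrt (4 * real (card (wedges G)))" by (simp add: real_le_rsqrt)
    also have "\<dots> = 2 * sqrt (real (card (wedges G)))" by (simp add: real_sqrt_mult)
    finally show ?thesis unfolding k_def S_def .
  qed
qed

lemma deg_bound:
  assumes "simple_graph G" "card (wedges G) \<ge> 1" "x \<in> G" "T \<subseteq> wedges G"
  shows "real (card {y\<in>G. {x, y} \<in> T}) \<le> 4 * sqrt (real (card (wedges G)))"
proof -
  have finG: "finite G" using assms(1) unfolding simple_graph_def by auto
  have "card x = 2" using assms(1,3) unfolding simple_graph_def by auto
  then obtain u v where x: "x = {u, v}" by (auto simp: card_2_iff)
  have "{y\<in>G. {x, y} \<in> T} \<subseteq> {y\<in>G. u \<in> y} \<union> {y\<in>G. v \<in> y}"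
  proof
    fix y assume "y \<in> {y\<in>G. {x, y} \<in> T}"
    then have "y \<in> G" "card (x \<inter> y) = 1" using assms(4) wedge_pair by auto
    then have "x \<inter> y \<noteq> {}" by auto
    then obtain w where "w \<in> x \<inter> y" by blast
    then show "y \<in> {y\<in>G. u \<in> y} \<union> {y\<in>G. v \<in> y}" using \<open>y \<in> G\<close> x by auto
  qed
  then have "card {y\<in>G. {x, y} \<in> T} \<le> card ({y\<in>G. u \<in> y} \<union> {y\<in>G. v \<in> y})"
    by (intro card_mono) (use finG in auto)
  also have "\<dots> \<le> card {y\<in>G. u \<in> y} + card {y\<in>G. v \<in> y}" by (rule card_Un_le)
  finally have "real (card {y\<in>G. {x, y} \<in> T}) \<le> real (card {y\<in>G. u \<in> y}) + real (card {y\<in>G. v \<in> y})"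
    by linarith
  then show ?thesis using star_bound[OF assms(1,2), of u] star_bound[OF assms(1,2), of v] by linarith
qed

lemma final_arith:
  fixes \<gamma> s m t N \<tau> :: real
  assumes g0: "0 < \<gamma>" and g1: "\<gamma> < 1" and s1: "1 \<le> s" and m0: "0 < m" and tau0: "0 < \<tau>"
    and taus: "\<tau> \<le> s ^ 2" and N: "t ^ 2 / 4 \<le> N" and t0: "0 < t"
    and tb: "100 * m / (\<gamma> ^ 3 * s) \<le> t"
  shows "N * (2 * \<tau> / m ^ 2 + 4 * t * (2 * \<tau> / m ^ 2 * (4 * s) / m))
         \<le> \<gamma> * ((\<gamma> * s ^ 2 / \<tau>) * (N * (2 * \<tau> / m ^ 2))) ^ 2"
proof -
  define v where "v = s * t / m"
  define pp where "pp = 2 * \<tau> / m ^ 2"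
  define K where "K = \<gamma> ^ 3 * s ^ 4 * N * 2 / (\<tau> * m ^ 2)"
  have g3: "0 < \<gamma> ^ 3" using g0 by simp
  have g31: "\<gamma> ^ 3 \<le> 1" using g0 g1 by (simp add: power_le_one)
  have s0: "0 < s" using s1 by simp
  have "100 * m \<le> t * (\<gamma> ^ 3 * s)"
    using tb g3 s0 by (simp add: divide_le_eq)
  then have gv: "100 \<le> \<gamma> ^ 3 * v"
    unfolding v_def using m0 by (simp add: le_divide_eq algebra_simps)
  have v0: "0 < v" unfolding v_def using s0 t0 m0 by simp
  have "\<gamma> ^ 3 * v \<le> v" using g31 v0 by (simp add: mult_le_cancel_right1)
  then have v100: "100 \<le> v" using gv by simp
  have Nnn: "0 \<le> N" using N by (smt (verit) zero_le_power2 divide_nonneg_pos)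
  have pp0: "0 \<le> pp" unfolding pp_def using tau0 by simp
  have lhs: "N * (2 * \<tau> / m ^ 2 + 4 * t * (2 * \<tau> / m ^ 2 * (4 * s) / m)) = N * pp * (1 + 16 * v)"
    unfolding pp_def v_def using m0 by (simp add: field_simps)
  have rhs: "\<gamma> * ((\<gamma> * s ^ 2 / \<tau>) * (N * (2 * \<tau> / m ^ 2))) ^ 2 = N * pp * K"
    unfolding pp_def K_def using m0 tau0 by (simp add: field_simps power2_eq_square eval_nat_numeral)
  have s4: "s ^ 2 \<le> s ^ 4 / \<tau>"
  proof -
    have "s ^ 2 * \<tau> \<le> s ^ 2 * s ^ 2" using taus by (intro mult_left_mono) auto
    then show ?thesis using tau0 by (simp add: le_divide_eq eval_nat_numeral algebra_simps)
  qed
  have "\<gamma> ^ 3 * v ^ 2 / 2 = \<gamma> ^ 3 * s ^ 2 * (t ^ 2 / 4) * 2 / m ^ 2"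
    unfolding v_def using m0 by (simp add: field_simps power2_eq_square)
  also have "\<dots> \<le> \<gamma> ^ 3 * (s ^ 4 / \<tau>) * N * 2 / m ^ 2"
    using g3 s4 N m0 tau0 by (intro divide_right_mono mult_right_mono mult_mono mult_left_mono) auto
  also have "\<dots> = K" unfolding K_def by (simp add: field_simps)
  finally have K1: "\<gamma> ^ 3 * v ^ 2 / 2 \<le> K" .
  have "1 + 16 * v \<le> 50 * v" using v100 by simp
  also have "50 * v \<le> \<gamma> ^ 3 * v ^ 2 / 2"
  proof -
    have "100 * v \<le> (\<gamma> ^ 3 * v) * v" using gv v0 by (intro mult_right_mono) auto
    then show ?thesis by (simp add: power2_eq_square algebra_simps)
  qed
  finally have "1 + 16 * v \<le> K" using K1 by simp
  then have "N * pp * (1 + 16 * v) \<le> N * pp * K"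
    using Nnn pp0 by (intro mult_left_mono) auto
  then show ?thesis unfolding lhs rhs .
qed

lemma card_pairs: "card {(i, j). i < j \<and> j < (t::nat)} = t choose 2"
proof (induction t)
  case 0 then show ?case by simp
next
  case (Suc t)
  have eq: "{(i, j). i < j \<and> j < Suc t} = {(i, j). i < j \<and> j < t} \<union> (\<lambda>i. (i, t)) ` {..<t}"
    by auto
  have fin: "finite {(i, j). i < j \<and> j < (t::nat)}"
    by (rule finite_subset[of _ "{..<t} \<times> {..<t}"]) auto
  have "card {(i, j). i < j \<and> j < Suc t} = card {(i, j). i < j \<and> j < t} + card ((\<lambda>i. (i, t)) ` {..<t})"
    unfolding eq by (rule card_Un_disjoint) (use fin in auto)
  also have "card ((\<lambda>i. (i, t)) ` {..<t}) = t" by (subst card_image) (auto simp: inj_on_def)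
  finally show ?case using Suc by (simp add: numeral_2_eq_2)
qed

lemma card_filter_sum: "finite A \<Longrightarrow> real (card {x\<in>A. P x}) = (\<Sum>x\<in>A. if P x then 1 else 0)"
  by (simp add: sum.inter_filter[symmetric])

locale wsetup =
  fixes G :: "'a set set" and T :: "'a set set set" and t :: nat
  assumes sg: "simple_graph G" and sub: "T \<subseteq> wedges G" and ne: "T \<noteq> {}" and t2: "2 \<le> t"
begin

definition gg :: "'a set \<Rightarrow> 'a set \<Rightarrow> real" where
  "gg a b = (if {a, b} \<in> T then 1 else 0)"

definition Pairs :: "(nat \<times> nat) set" where
  "Pairs = {(i, j). i < j \<and> j < t}"

definition pp :: real where
  "pp = 2 * real (card T) / real (card G) ^ 2"

lemma finG: "finite G" using sg unfolding simple_graph_def by auto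
lemma finT: "finite T" using finite_subset[OF sub finite_wedges[OF finG]] .
lemma Gne: "G \<noteq> {}"
proof -
  obtain w where "w \<in> T" using ne by blast
  then obtain e f where "e \<in> G" using sub by (meson subsetD wedge_elem)
  then show ?thesis by blast
qed
lemma mpos: "card G > 0" using finG Gne by (simp add: card_gt_0_iff)

lemma finPairs: "finite Pairs"
  unfolding Pairs_def by (rule finite_subset[of _ "{..<t} \<times> {..<t}"]) auto

lemma cardPairs: "card Pairs = t choose 2"
  unfolding Pairs_def by (rule card_pairs)

lemma fin_supp: "finite (set_pmf (random_edges G t))"
  unfolding random_edges_def using finG Gne
  by (subst set_Pi_pmf) (auto intro!: finite_PiE_dflt)

lemma integ: "integrable (measure_pmf (random_edges G t)) (f :: _ \<Rightarrow> real)"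
  by (rule integrable_measure_pmf_finite[OF fin_supp])

lemma sum_gg: "(\<Sum>(a, b)\<in>G \<times> G. gg a b) = 2 * real (card T)"
proof -
  have "(\<Sum>(a, b)\<in>G \<times> G. gg a b) = (\<Sum>z\<in>G \<times> G. if (case z of (a, b) \<Rightarrow> {a, b} \<in> T) then 1 else 0)"
    by (intro sum.cong) (auto simp: gg_def)
  also have "\<dots> = real (card {z\<in>G \<times> G. case z of (a, b) \<Rightarrow> {a, b} \<in> T})"
    by (rule card_filter_sum[symmetric]) (use finG in auto)
  also have "{z\<in>G \<times> G. case z of (a, b) \<Rightarrow> {a, b} \<in> T} = {(a, b). {a, b} \<in> T}"
    using sub wedge_pair by blast
  also have "card {(a, b). {a, b} \<in> T} = 2 * card T"
    by (rule card_ordered_pairs[OF finT sub])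
  finally show ?thesis by simp
qed

lemma EY:
  assumes "i \<noteq> j" "i < t" "j < t"
  shows "measure_pmf.expectation (random_edges G t) (\<lambda>r. gg (r i) (r j)) = pp"
proof -
  have "measure_pmf.expectation (random_edges G t) (\<lambda>r. gg (r i) (r j))
      = measure_pmf.expectation (map_pmf (\<lambda>r. (r i, r j)) (random_edges G t)) (\<lambda>(a, b). gg a b)"
    by simp
  also have "\<dots> = measure_pmf.expectation (pmf_of_set (G \<times> G)) (\<lambda>(a, b). gg a b)"
    by (subst marg2) (use assms finG Gne in auto)
  also have "\<dots> = (\<Sum>(a, b)\<in>G \<times> G. gg a b) / real (card (G \<times> G))"
    by (subst integral_pmf_of_set) (use finG Gne in auto)
  also have "\<dots> = pp"
    unfolding sum_gg pp_def by (simp add: card_cartesian_product power2_eq_square)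
  finally show ?thesis .
qed

lemma X_sum: "real (pair_count T t r) = (\<Sum>q\<in>Pairs. gg (r (fst q)) (r (snd q)))"
proof -
  have "pair_count T t r = card {q\<in>Pairs. {r (fst q), r (snd q)} \<in> T}"
    unfolding pair_count_def Pairs_def by (intro arg_cong[where f=card]) auto
  then show ?thesis
    by (simp add: card_filter_sum[OF finPairs] gg_def)
qed

lemma EX: "measure_pmf.expectation (random_edges G t) (\<lambda>r. real (pair_count T t r))
           = real (t choose 2) * pp"
proof -
  have "measure_pmf.expectation (random_edges G t) (\<lambda>r. real (pair_count T t r))
      = measure_pmf.expectation (random_edges G t) (\<lambda>r. \<Sum>q\<in>Pairs. gg (r (fst q)) (r (snd q)))"
    by (simp add: X_sum)
  also have "\<dots> = (\<Sum>q\<in>Pairs. measure_pmf.expectation (random_edges G t) (\<lambda>r. gg (r (fst q)) (r (snd q))))"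
    by (rule Bochner_Integration.integral_sum) (rule integ)
  also have "\<dots> = (\<Sum>q\<in>Pairs. pp)"
    by (intro sum.cong refl EY) (auto simp: Pairs_def)
  also have "\<dots> = real (t choose 2) * pp" by (simp add: cardPairs)
  finally show ?thesis .
qed

end

context wsetup begin

lemma gg_comm: "gg a b = gg b a" unfolding gg_def by (simp add: insert_commute)

lemma gg_sq: "gg a b * gg a b = gg a b" unfolding gg_def by simp

lemma gg_nonneg: "gg a b \<ge> 0" unfolding gg_def by simp

lemma pp_nonneg: "pp \<ge> 0" unfolding pp_def by simp

lemma EYY_disj:
  assumes "i \<noteq> j" "i \<noteq> k" "j \<noteq> k" "i \<noteq> l" "j \<noteq> l" "k \<noteq> l" "i < t" "j < t" "k < t" "l < t"
  shows "measure_pmf.expectation (random_edges G t) (\<lambda>r. gg (r i) (r j) * gg (r k) (r l)) = pp ^ 2"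
proof -
  have "measure_pmf.expectation (random_edges G t) (\<lambda>r. gg (r i) (r j) * gg (r k) (r l))
      = measure_pmf.expectation (map_pmf (\<lambda>r. ((r i, r j), (r k, r l))) (random_edges G t))
           (\<lambda>((a, b), (c, d)). gg a b * gg c d)"
    by simp
  also have "\<dots> = measure_pmf.expectation (pmf_of_set ((G \<times> G) \<times> (G \<times> G))) (\<lambda>((a, b), (c, d)). gg a b * gg c d)"
    by (subst marg4) (use assms finG Gne in auto)
  also have "\<dots> = (\<Sum>z\<in>(G \<times> G) \<times> (G \<times> G). (\<lambda>((a, b), (c, d)). gg a b * gg c d) z) / real (card ((G \<times> G) \<times> (G \<times> G)))"
    by (subst integral_pmf_of_set) (use finG Gne in auto)
  also have "(\<Sum>z\<in>(G \<times> G) \<times> (G \<times> G). (\<lambda>((a, b), (c, d)). gg a b * gg c d) z)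
      = (\<Sum>u\<in>G \<times> G. \<Sum>v\<in>G \<times> G. (\<lambda>(a, b). gg a b) u * (\<lambda>(a, b). gg a b) v)"
    by (subst sum.cartesian_product) (auto simp: case_prod_beta intro!: sum.cong)
  also have "\<dots> = (\<Sum>u\<in>G \<times> G. (\<lambda>(a, b). gg a b) u) * (\<Sum>v\<in>G \<times> G. (\<lambda>(a, b). gg a b) v)"
    by (rule sum_product[symmetric])
  also have "\<dots> = (2 * real (card T)) ^ 2" using sum_gg by (simp add: power2_eq_square)
  moreover have "real (card G) ^ 4 = real (card G) * real (card G) * (real (card G) * real (card G))"
    by (simp add: eval_nat_numeral)
  ultimately show ?thesis
    unfolding pp_def by (simp add: card_cartesian_product power_divide power_mult_distrib)
qed

lemma EYY_same:
  assumes "i \<noteq> j" "i < t" "j < t"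
  shows "measure_pmf.expectation (random_edges G t) (\<lambda>r. gg (r i) (r j) * gg (r i) (r j)) = pp"
  using EY[OF assms] by (simp add: gg_sq)

definition deg :: "'a set \<Rightarrow> real" where
  "deg x = (\<Sum>y\<in>G. gg x y)"

lemma sum_deg: "(\<Sum>x\<in>G. deg x) = 2 * real (card T)"
  unfolding deg_def using sum_gg by (simp add: sum.cartesian_product)

lemma deg_le:
  assumes "x \<in> G" "card (wedges G) \<ge> 1"
  shows "deg x \<le> 4 * sqrt (real (card (wedges G)))"
proof -
  have "deg x = real (card {y\<in>G. {x, y} \<in> T})"
    unfolding deg_def gg_def using card_filter_sum[OF finG, of "\<lambda>y. {x, y} \<in> T"] by simp
  then show ?thesis using deg_bound[OF sg assms(2) assms(1) sub] by simp
qed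

lemma EYY_share:
  assumes "a \<noteq> b" "a \<noteq> c" "b \<noteq> c" "a < t" "b < t" "c < t" "card (wedges G) \<ge> 1"
  shows "measure_pmf.expectation (random_edges G t) (\<lambda>r. gg (r a) (r b) * gg (r a) (r c))
         \<le> pp * (4 * sqrt (real (card (wedges G)))) / real (card G)"
proof -
  define B where "B = 4 * sqrt (real (card (wedges G)))"
  have "measure_pmf.expectation (random_edges G t) (\<lambda>r. gg (r a) (r b) * gg (r a) (r c))
      = measure_pmf.expectation (map_pmf (\<lambda>r. (r a, r b, r c)) (random_edges G t))
           (\<lambda>(x, y, z). gg x y * gg x z)"
    by simp
  also have "\<dots> = measure_pmf.expectation (pmf_of_set (G \<times> G \<times> G)) (\<lambda>(x, y, z). gg x y * gg x z)"
    by (subst marg3) (use assms finG Gne in auto)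
  also have "\<dots> = (\<Sum>w\<in>G \<times> G \<times> G. (\<lambda>(x, y, z). gg x y * gg x z) w) / real (card (G \<times> G \<times> G))"
    by (subst integral_pmf_of_set) (use finG Gne in auto)
  also have "(\<Sum>w\<in>G \<times> G \<times> G. (\<lambda>(x, y, z). gg x y * gg x z) w) = (\<Sum>x\<in>G. deg x * deg x)"
  proof -
    have "(\<Sum>w\<in>G \<times> G \<times> G. (\<lambda>(x, y, z). gg x y * gg x z) w)
        = (\<Sum>x\<in>G. \<Sum>v\<in>G \<times> G. (\<lambda>(y, z). gg x y * gg x z) v)"
      by (subst sum.cartesian_product) (auto simp: case_prod_beta intro!: sum.cong)
    also have "\<dots> = (\<Sum>x\<in>G. \<Sum>y\<in>G. \<Sum>z\<in>G. gg x y * gg x z)"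
      by (intro sum.cong refl) (subst sum.cartesian_product, auto simp: case_prod_beta intro!: sum.cong)
    also have "\<dots> = (\<Sum>x\<in>G. deg x * deg x)"
      unfolding deg_def by (intro sum.cong refl) (simp add: sum_product)
    finally show ?thesis .
  qed
  also have "(\<Sum>x\<in>G. deg x * deg x) \<le> (\<Sum>x\<in>G. B * deg x)"
  proof (intro sum_mono)
    fix x assume "x \<in> G"
    have "deg x \<ge> 0" unfolding deg_def by (intro sum_nonneg gg_nonneg)
    then show "deg x * deg x \<le> B * deg x"
      using deg_le[OF \<open>x \<in> G\<close> assms(7)] unfolding B_def by (intro mult_right_mono) auto
  qed
  also have "(\<Sum>x\<in>G. B * deg x) = B * (2 * real (card T))"
    by (simp add: sum_distrib_left[symmetric] sum_deg)
  finally have "measure_pmf.expectation (random_edges G t) (\<lambda>r. gg (r a) (r b) * gg (r a) (r c))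
      \<le> B * (2 * real (card T)) / real (card (G \<times> G \<times> G))"
    by (simp add: divide_right_mono)
  also have "\<dots> = pp * B / real (card G)"
    unfolding pp_def using mpos by (simp add: card_cartesian_product power2_eq_square field_simps)
  finally show ?thesis unfolding B_def .
qed

end

context wsetup begin

definition Y :: "nat \<times> nat \<Rightarrow> (nat \<Rightarrow> 'a set) \<Rightarrow> real" where
  "Y q r = gg (r (fst q)) (r (snd q))"

definition Ov :: "nat \<times> nat \<Rightarrow> (nat \<times> nat) set" where
  "Ov q = {q'\<in>Pairs. fst q' \<in> {fst q, snd q} \<or> snd q' \<in> {fst q, snd q}}"

lemma card_Ov: "card (Ov q) \<le> 4 * t"
proof -
  have "Ov q \<subseteq> ({fst q, snd q} \<times> {..<t}) \<union> ({..<t} \<times> {fst q, snd q})"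
    unfolding Ov_def Pairs_def by auto
  then have "card (Ov q) \<le> card (({fst q, snd q} \<times> {..<t}) \<union> ({..<t} \<times> {fst q, snd q}))"
    by (intro card_mono) auto
  also have "\<dots> \<le> card ({fst q, snd q} \<times> {..<t}) + card ({..<t} \<times> {fst q, snd q})"
    by (rule card_Un_le)
  also have "\<dots> \<le> 2 * t + t * 2"
  proof -
    have c: "card {fst q, snd q} \<le> 2" by (simp add: card_insert_if)
    have c2: "card {fst q, snd q} * t \<le> 2 * t" using c by (rule mult_le_mono1)
    have c3: "t * card {fst q, snd q} \<le> t * 2" using c by (rule mult_le_mono2)
    show ?thesis unfolding card_cartesian_product card_lessThan using c2 c3 by linarith
  qed
  finally show ?thesis by simp
qed

lemma EYq: "q \<in> Pairs \<Longrightarrow> measure_pmf.expectation (random_edges G t) (Y q) = pp"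
  unfolding Y_def by (rule EY) (auto simp: Pairs_def)

lemma cov_expand:
  assumes "measure_pmf.expectation (random_edges G t) f = pp"
      and "measure_pmf.expectation (random_edges G t) g = pp"
  shows "measure_pmf.expectation (random_edges G t) (\<lambda>r. (f r - pp) * (g r - pp))
       = measure_pmf.expectation (random_edges G t) (\<lambda>r. f r * g r) - pp ^ 2"
proof -
  have e: "(\<lambda>r. (f r - pp) * (g r - pp)) = (\<lambda>r. (f r * g r - pp * g r) - (pp * f r - pp ^ 2))"
    by (auto simp: algebra_simps power2_eq_square)
  show ?thesis unfolding e
    by (simp add: integ assms power2_eq_square)
qed

end

context wsetup begin

abbreviation "BB \<equiv> 4 * sqrt (real (card (wedges G)))"

lemma BB_nonneg: "BB \<ge> 0" by simp

lemma cov_bound: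
  assumes q: "q \<in> Pairs" and q': "q' \<in> Pairs" and W: "card (wedges G) \<ge> 1"
  shows "measure_pmf.expectation (random_edges G t) (\<lambda>r. (Y q r - pp) * (Y q' r - pp))
       \<le> (if q' = q then pp else 0) + (if q' \<in> Ov q then pp * BB / real (card G) else 0)"
proof -
  have c: "measure_pmf.expectation (random_edges G t) (\<lambda>r. (Y q r - pp) * (Y q' r - pp))
       = measure_pmf.expectation (random_edges G t) (\<lambda>r. Y q r * Y q' r) - pp ^ 2"
    by (rule cov_expand) (use EYq q q' in auto)
  obtain i j where ij: "q = (i, j)" "i < j" "j < t" using q unfolding Pairs_def by auto
  obtain k l where kl: "q' = (k, l)" "k < l" "l < t" using q' unfolding Pairs_def by auto
  have nn: "pp * BB / real (card G) \<ge> 0" using pp_nonneg by simp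
  have sq: "pp ^ 2 \<ge> 0" by simp
  show ?thesis
  proof (cases "q' = q")
    case True
    then have "measure_pmf.expectation (random_edges G t) (\<lambda>r. Y q r * Y q' r) = pp"
      using EYY_same[of i j] ij unfolding Y_def by simp
    then show ?thesis using c True nn sq by (auto; linarith)
  next
    case neq: False
    show ?thesis
    proof (cases "q' \<in> Ov q")
      case True
      have "measure_pmf.expectation (random_edges G t) (\<lambda>r. Y q r * Y q' r) \<le> pp * BB / real (card G)"
      proof -
        have ov: "k = i \<or> k = j \<or> l = i \<or> l = j" using True ij kl unfolding Ov_def by auto
        have ne: "\<not> (k = i \<and> l = j)" using neq ij kl by auto
        consider (a) "k = i" "l \<noteq> j" | (b) "k = j" | (c) "l = i" | (d) "l = j" "k \<noteq> i"
          using ov ne by blast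
        then show ?thesis
        proof cases
          case a
          have "(\<lambda>r. Y q r * Y q' r) = (\<lambda>r. gg (r i) (r j) * gg (r i) (r l))"
            using a ij kl unfolding Y_def by simp
          then show ?thesis using EYY_share[of i j l] a ij kl W by simp
        next
          case b
          have "(\<lambda>r. Y q r * Y q' r) = (\<lambda>r. gg (r j) (r i) * gg (r j) (r l))"
            using b ij kl unfolding Y_def by (simp add: gg_comm)
          then show ?thesis using EYY_share[of j i l] b ij kl W by simp
        next
          case c
          have "(\<lambda>r. Y q r * Y q' r) = (\<lambda>r. gg (r i) (r j) * gg (r i) (r k))"
            using c ij kl unfolding Y_def by (simp add: gg_comm)
          then show ?thesis using EYY_share[of i j k] c ij kl W by simp
        next
          case d
          have "(\<lambda>r. Y q r * Y q' r) = (\<lambda>r. gg (r j) (r i) * gg (r j) (r k))"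
            using d ij kl unfolding Y_def by (simp add: gg_comm)
          then show ?thesis using EYY_share[of j i k] d ij kl W by simp
        qed
      qed
      then show ?thesis using c True neq sq by (auto; linarith)
    next
      case False
      have "i \<noteq> k" "i \<noteq> l" "j \<noteq> k" "j \<noteq> l" using False ij kl q' unfolding Ov_def by auto
      then have "measure_pmf.expectation (random_edges G t) (\<lambda>r. Y q r * Y q' r) = pp ^ 2"
        using EYY_disj[of i j k l] ij kl unfolding Y_def by simp
      then show ?thesis using c False neq by auto
    qed
  qed
qed

lemma var_bound:
  assumes W: "card (wedges G) \<ge> 1"
  shows "measure_pmf.expectation (random_edges G t)
           (\<lambda>r. (real (pair_count T t r) - real (t choose 2) * pp) ^ 2)
       \<le> real (t choose 2) * (pp + 4 * real t * (pp * BB / real (card G)))"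
proof -
  have eq: "(\<lambda>r. (real (pair_count T t r) - real (t choose 2) * pp) ^ 2)
      = (\<lambda>r. \<Sum>q\<in>Pairs. \<Sum>q'\<in>Pairs. (Y q r - pp) * (Y q' r - pp))"
  proof
    fix r
    have "real (pair_count T t r) - real (t choose 2) * pp = (\<Sum>q\<in>Pairs. Y q r - pp)"
      unfolding X_sum Y_def by (simp add: sum_subtractf cardPairs)
    then show "(real (pair_count T t r) - real (t choose 2) * pp) ^ 2
        = (\<Sum>q\<in>Pairs. \<Sum>q'\<in>Pairs. (Y q r - pp) * (Y q' r - pp))"
      by (simp add: power2_eq_square sum_product)
  qed
  have "measure_pmf.expectation (random_edges G t) (\<lambda>r. \<Sum>q\<in>Pairs. \<Sum>q'\<in>Pairs. (Y q r - pp) * (Y q' r - pp))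
      = (\<Sum>q\<in>Pairs. \<Sum>q'\<in>Pairs. measure_pmf.expectation (random_edges G t) (\<lambda>r. (Y q r - pp) * (Y q' r - pp)))"
    by (simp add: Bochner_Integration.integral_sum integ)
  also have "\<dots> \<le> (\<Sum>q\<in>Pairs. \<Sum>q'\<in>Pairs. (if q' = q then pp else 0) + (if q' \<in> Ov q then pp * BB / real (card G) else 0))"
    by (intro sum_mono cov_bound W)
  also have "\<dots> \<le> (\<Sum>q\<in>Pairs. pp + 4 * real t * (pp * BB / real (card G)))"
  proof (intro sum_mono)
    fix q assume q: "q \<in> Pairs"
    have ovs: "Ov q \<subseteq> Pairs" unfolding Ov_def by auto
    have "(\<Sum>q'\<in>Pairs. (if q' = q then pp else 0) + (if q' \<in> Ov q then pp * BB / real (card G) else 0))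
        = pp + real (card (Ov q)) * (pp * BB / real (card G))"
      using q finPairs ovs by (simp add: sum.distrib sum.If_cases Int_absorb1)
    also have "\<dots> \<le> pp + 4 * real t * (pp * BB / real (card G))"
      using card_Ov[of q] pp_nonneg by (intro add_left_mono mult_right_mono) auto
    finally show "(\<Sum>q'\<in>Pairs. (if q' = q then pp else 0) + (if q' \<in> Ov q then pp * BB / real (card G) else 0))
        \<le> pp + 4 * real t * (pp * BB / real (card G))" .
  qed
  also have "\<dots> = real (t choose 2) * (pp + 4 * real t * (pp * BB / real (card G)))"
    by (simp add: cardPairs)
  finally show ?thesis unfolding eq .
qed

end

context wsetup begin

lemma conc:
  assumes g0: "0 < \<gamma>" and g1: "\<gamma> < 1" and Wm: "card G \<le> card (wedges G)"
    and tb: "100 * real (card G) / (\<gamma> ^ 3 * sqrt (real (card (wedges G)))) \<le> real t"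
  shows "1 - \<gamma> \<le> measure_pmf.prob (random_edges G t)
           {r. \<bar>real (pair_count T t r)
                 - measure_pmf.expectation (random_edges G t) (\<lambda>r. real (pair_count T t r))\<bar>
              \<le> (\<gamma> * real (card (wedges G)) / real (card T))
                 * measure_pmf.expectation (random_edges G t) (\<lambda>r. real (pair_count T t r))}"
proof -
  define X where "X = (\<lambda>r. real (pair_count T t r))"
  define N where "N = real (t choose 2)"
  define W where "W = real (card (wedges G))"
  define s where "s = sqrt W"
  define \<tau> where "\<tau> = real (card T)"
  define m where "m = real (card G)"
  have mu: "measure_pmf.expectation (random_edges G t) X = N * pp"
    unfolding X_def N_def by (rule EX)
  have m0: "0 < m" unfolding m_def using mpos by simp
  have W1: "1 \<le> card (wedges G)" using Wm mpos by simp
  have W1': "1 \<le> W" unfolding W_def using W1 by simp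
  have s1: "1 \<le> s" unfolding s_def using W1' by simp
  have sW: "s ^ 2 = W" unfolding s_def using W1' by simp
  have tau0: "0 < \<tau>" unfolding \<tau>_def using finT ne by (simp add: card_gt_0_iff)
  have tauW: "\<tau> \<le> s ^ 2" unfolding sW \<tau>_def W_def
    using card_mono[OF finite_wedges[OF finG] sub] by simp
  have t0: "0 < real t" using t2 by simp
  have Nt: "real t ^ 2 / 4 \<le> N"
  proof -
    have "N = real t * (real t - 1) / 2" unfolding N_def by (rule real_choose_two)
    moreover have "real t * real t \<le> real t * (2 * (real t - 1))"
      using t2 by (intro mult_left_mono) auto
    ultimately show ?thesis by (simp add: power2_eq_square field_simps)
  qed
  have N0: "0 < N" using Nt t0 by (smt (verit) divide_pos_pos zero_less_power)
  have pp0: "0 < pp" unfolding pp_def using tau0 m0 \<tau>_def m_def by simp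
  define \<delta> where "\<delta> = (\<gamma> * W / \<tau>) * (N * pp)"
  have d0: "0 < \<delta>" unfolding \<delta>_def using g0 W1' tau0 N0 pp0 by simp
  have cheb: "measure_pmf.prob (random_edges G t) {x \<in> space (measure_pmf (random_edges G t)).
                 \<delta> \<le> \<bar>X x - measure_pmf.expectation (random_edges G t) X\<bar>}
             \<le> measure_pmf.variance (random_edges G t) X / \<delta> ^ 2"
    by (rule measure_pmf.Chebyshev_inequality) (auto simp: integ d0)
  have var: "measure_pmf.variance (random_edges G t) X
      \<le> N * (pp + 4 * real t * (pp * (4 * s) / m))"
    using var_bound[OF W1] EX unfolding X_def N_def s_def W_def m_def by simp
  have ar: "N * (pp + 4 * real t * (pp * (4 * s) / m)) \<le> \<gamma> * \<delta> ^ 2"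
  proof -
    have tb': "100 * m / (\<gamma> ^ 3 * s) \<le> real t" using tb unfolding m_def s_def W_def .
    have "N * (2 * \<tau> / m ^ 2 + 4 * real t * (2 * \<tau> / m ^ 2 * (4 * s) / m))
         \<le> \<gamma> * ((\<gamma> * s ^ 2 / \<tau>) * (N * (2 * \<tau> / m ^ 2))) ^ 2"
      by (rule final_arith[OF g0 g1 s1 m0 tau0 tauW Nt t0 tb'])
    moreover have "pp = 2 * \<tau> / m ^ 2" unfolding pp_def \<tau>_def m_def ..
    ultimately show ?thesis unfolding \<delta>_def sW by simp
  qed
  have "measure_pmf.prob (random_edges G t) {x. \<delta> \<le> \<bar>X x - N * pp\<bar>} \<le> \<gamma>"
  proof -
    have "measure_pmf.variance (random_edges G t) X / \<delta> ^ 2 \<le> \<gamma> * \<delta> ^ 2 / \<delta> ^ 2"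
      using var ar d0 by (intro divide_right_mono) auto
    also have "\<dots> = \<gamma>" using d0 by simp
    finally show ?thesis using cheb mu by simp
  qed
  moreover have "measure_pmf.prob (random_edges G t) {x. \<bar>X x - N * pp\<bar> \<le> \<delta>}
      \<ge> 1 - measure_pmf.prob (random_edges G t) {x. \<delta> \<le> \<bar>X x - N * pp\<bar>}"
  proof -
    have "{x. \<bar>X x - N * pp\<bar> \<le> \<delta>} \<supseteq> UNIV - {x. \<delta> \<le> \<bar>X x - N * pp\<bar>}" by auto
    then have "measure_pmf.prob (random_edges G t) {x. \<bar>X x - N * pp\<bar> \<le> \<delta>}
        \<ge> measure_pmf.prob (random_edges G t) (UNIV - {x. \<delta> \<le> \<bar>X x - N * pp\<bar>})"
      by (intro measure_pmf.finite_measure_mono) auto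
    also have "measure_pmf.prob (random_edges G t) (UNIV - {x. \<delta> \<le> \<bar>X x - N * pp\<bar>})
        = 1 - measure_pmf.prob (random_edges G t) {x. \<delta> \<le> \<bar>X x - N * pp\<bar>}"
      using measure_pmf.prob_compl[of "{x. \<delta> \<le> \<bar>X x - N * pp\<bar>}" "random_edges G t"] by simp
    finally show ?thesis .
  qed
  ultimately have "1 - \<gamma> \<le> measure_pmf.prob (random_edges G t) {x. \<bar>X x - N * pp\<bar> \<le> \<delta>}"
    by linarith
  then show ?thesis
    unfolding \<delta>_def mu[unfolded X_def] X_def W_def \<tau>_def by simp
qed

end

theorem mainTheorem2:
  fixes E :: "'a set set" and S :: "'a set set set" and s :: nat
  assumes "simple_graph E" and "S \<subseteq> wedges E" and "S \<noteq> {}" and "s \<ge> 2"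
  shows "(measure_pmf.expectation (random_edges E s) (\<lambda>r. real (pair_count S s r))
           = real (s choose 2) * (2 * real (card S) / real (card E) ^ 2))
    \<and> (\<exists>c'::real. \<forall>\<gamma>::real. \<forall>(G::nat set set) (T::nat set set set) (t::nat).
           0 < \<gamma> \<and> \<gamma> < 1 \<and> simple_graph G \<and> T \<subseteq> wedges G \<and> T \<noteq> {} \<and> t \<ge> 2 \<and>
           card (wedges G) \<ge> card G \<and>
           real t \<ge> c' * real (card G) / (\<gamma> ^ 3 * sqrt (real (card (wedges G))))
           \<longrightarrow> measure_pmf.prob (random_edges G t)
                 {r. \<bar>real (pair_count T t r)
                        - measure_pmf.expectation (random_edges G t) (\<lambda>r. real (pair_count T t r))\<bar>
                     \<le> (\<gamma> * real (card (wedges G)) / real (card T))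
                        * measure_pmf.expectation (random_edges G t) (\<lambda>r. real (pair_count T t r))}
               \<ge> 1 - \<gamma>)"
proof
  interpret w: wsetup E S s using assms by unfold_locales
  show "measure_pmf.expectation (random_edges E s) (\<lambda>r. real (pair_count S s r))
           = real (s choose 2) * (2 * real (card S) / real (card E) ^ 2)"
    using w.EX unfolding w.pp_def .
next
  show "\<exists>c'::real. \<forall>\<gamma>::real. \<forall>(G::nat set set) (T::nat set set set) (t::nat).
           0 < \<gamma> \<and> \<gamma> < 1 \<and> simple_graph G \<and> T \<subseteq> wedges G \<and> T \<noteq> {} \<and> t \<ge> 2 \<and>
           card (wedges G) \<ge> card G \<and>
           real t \<ge> c' * real (card G) / (\<gamma> ^ 3 * sqrt (real (card (wedges G))))
           \<longrightarrow> measure_pmf.prob (random_edges G t)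
                 {r. \<bar>real (pair_count T t r)
                        - measure_pmf.expectation (random_edges G t) (\<lambda>r. real (pair_count T t r))\<bar>
                     \<le> (\<gamma> * real (card (wedges G)) / real (card T))
                        * measure_pmf.expectation (random_edges G t) (\<lambda>r. real (pair_count T t r))}
               \<ge> 1 - \<gamma>"
  proof (intro exI[of _ 100] allI impI)
    fix \<gamma> :: real and G :: "nat set set" and T :: "nat set set set" and t :: nat
    assume h: "0 < \<gamma> \<and> \<gamma> < 1 \<and> simple_graph G \<and> T \<subseteq> wedges G \<and> T \<noteq> {} \<and> t \<ge> 2 \<and>
           card (wedges G) \<ge> card G \<and>
           real t \<ge> 100 * real (card G) / (\<gamma> ^ 3 * sqrt (real (card (wedges G))))"
    interpret w: wsetup G T t using h by unfold_locales auto
    show "measure_pmf.prob (random_edges G t)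
                 {r. \<bar>real (pair_count T t r)
                        - measure_pmf.expectation (random_edges G t) (\<lambda>r. real (pair_count T t r))\<bar>
                     \<le> (\<gamma> * real (card (wedges G)) / real (card T))
                        * measure_pmf.expectation (random_edges G t) (\<lambda>r. real (pair_count T t r))}
               \<ge> 1 - \<gamma>"
      using w.conc h by auto
  qed
qed

end
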